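(* Let $G$ be an undirected, connected graph on $N\ge2$ vertices with Laplacian $L$ and degree matrix $D=\operatorname{diag}(|\mathcal N_1|,\dots,|\mathcal N_N|)$. Fix weights $w_1,w_2,w_3>0$. For $h>0$ define \[ a^h=\frac{w_1h^2}{2\left(w_3+w_2h^2+w_1\frac{h^4}{4}\right)},\qquad b^h=\frac{w_2h+w_1\frac{h^3}{2}}{w_3+w_2h^2+w_1\frac{h^4}{4}}, \] and for an eigenvalue $\lambda_i$ of $D^{-1}L$ define \[ Q_i^h=\begin{bmatrix}1-\frac{h^2}{2}a^h\lambda_i & h-\frac{h^2}{2}b^h\\ -ha^h\lambda_i & 1-hb^h\end{bmatrix}. \] Then for every eigenvalue $\lambda_i>0$ of $D^{-1}L$ there exists $h_i>0$ such that $\rho(Q_i^h)<1$ for all $h\in(0,h_i)$, where $\rho$ denotes the spectral radius.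
   Context: $\mathcal N_i$ is the set of neighbors of vertex $i$ and $|\mathcal N_i|$ its degree. Since the graph is connected, $D$ is invertible. The eigenvalues of $D^{-1}L$ are real and satisfy $0=\lambda_1<\lambda_2\le\dots\le\lambda_N\le2$. *)

theory Defs
  imports "Jordan_Normal_Form.Spectral_Radius"
begin

definition undirected_graph :: "nat \<Rightarrow> (nat \<Rightarrow> nat \<Rightarrow> bool) \<Rightarrow> bool" where
  "undirected_graph N E \<longleftrightarrow>
     (\<forall>i j. E i j \<longrightarrow> i < N \<and> j < N) \<and>
     (\<forall>i j. E i j \<longrightarrow> E j i) \<and>
     (\<forall>i. \<not> E i i)"

definition connected_graph :: "nat \<Rightarrow> (nat \<Rightarrow> nat \<Rightarrow> bool) \<Rightarrow> bool" where
  "connected_graph N E \<longleftrightarrow> (\<forall>i<N. \<forall>j<N. E\<^sup>*\<^sup>* i j)"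

definition nbrs :: "nat \<Rightarrow> (nat \<Rightarrow> nat \<Rightarrow> bool) \<Rightarrow> nat \<Rightarrow> nat set" where
  "nbrs N E i = {j. j < N \<and> E i j}"

definition degree_mat :: "nat \<Rightarrow> (nat \<Rightarrow> nat \<Rightarrow> bool) \<Rightarrow> real mat" where
  "degree_mat N E = mat N N (\<lambda>(i,j). if i = j then real (card (nbrs N E i)) else 0)"

definition adjacency_mat :: "nat \<Rightarrow> (nat \<Rightarrow> nat \<Rightarrow> bool) \<Rightarrow> real mat" where
  "adjacency_mat N E = mat N N (\<lambda>(i,j). if E i j then 1 else 0)"

definition laplacian_mat :: "nat \<Rightarrow> (nat \<Rightarrow> nat \<Rightarrow> bool) \<Rightarrow> real mat" where
  "laplacian_mat N E = degree_mat N E - adjacency_mat N E"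

definition inv_degree_mat :: "nat \<Rightarrow> (nat \<Rightarrow> nat \<Rightarrow> bool) \<Rightarrow> real mat" where
  "inv_degree_mat N E = mat N N (\<lambda>(i,j). if i = j then 1 / real (card (nbrs N E i)) else 0)"

definition a_h :: "real \<Rightarrow> real \<Rightarrow> real \<Rightarrow> real \<Rightarrow> real" where
  "a_h w1 w2 w3 h = w1 * h^2 / (2 * (w3 + w2 * h^2 + w1 * h^4 / 4))"

definition b_h :: "real \<Rightarrow> real \<Rightarrow> real \<Rightarrow> real \<Rightarrow> real" where
  "b_h w1 w2 w3 h = (w2 * h + w1 * h^3 / 2) / (w3 + w2 * h^2 + w1 * h^4 / 4)"

definition Q_h :: "real \<Rightarrow> real \<Rightarrow> real \<Rightarrow> real \<Rightarrow> real \<Rightarrow> real mat" where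
  "Q_h w1 w2 w3 lam h = mat_of_rows_list 2
     [[1 - h^2 / 2 * a_h w1 w2 w3 h * lam, h - h^2 / 2 * b_h w1 w2 w3 h],
      [- h * a_h w1 w2 w3 h * lam,          1 - h * b_h w1 w2 w3 h]]"

end

theory Submission imports Defs begin
lemma det2: fixes A :: "'a::field mat" assumes "A \<in> carrier_mat 2 2"
  shows "det A = A$$(0,0)*A$$(1,1) - A$$(0,1)*A$$(1,0)"
  using assms
  apply (subst laplace_expansion_column[OF assms, of 0]) 
  apply (auto simp: cofactor_def mat_delete_def det_def' numeral_2_eq_2 lessThan_Suc)
  apply (subst (1 2) det_single)
  apply auto
  done

lemma real_root_bound:
  fixes x T D :: real
  assumes "x^2 - T*x + D = 0" "\<bar>D\<bar> < 1" "\<bar>T\<bar> < 1 + D"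
  shows "\<bar>x\<bar> < 1"
proof (rule ccontr)
  assume "\<not> \<bar>x\<bar> < 1"
  hence "x \<ge> 1 \<or> x \<le> -1" by auto
  thus False
  proof
    assume h: "x \<ge> 1"
    have "x^2 - T*x + D = (x-1)*(x+1-T) + (1-T+D)" by (simp add: algebra_simps power2_eq_square)
    moreover have "(x-1)*(x+1-T) \<ge> 0" using h assms by (intro mult_nonneg_nonneg) auto
    ultimately show False using assms by auto
  next
    assume h: "x \<le> -1"
    have "x^2 - T*x + D = (x+1)*(x-1-T) + (1+T+D)" by (simp add: algebra_simps power2_eq_square)
    moreover have "(x+1)*(x-1-T) \<ge> 0" using h assms by (intro mult_nonpos_nonpos) auto
    ultimately show False using assms by auto
  qed
qed

lemma complex_root_bound:
  fixes z :: complex and T D :: real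
  assumes "z^2 - of_real T * z + of_real D = 0" "\<bar>D\<bar> < 1" "\<bar>T\<bar> < 1 + D"
  shows "cmod z < 1"
proof -
  obtain x y where z: "z = Complex x y" by (cases z)
  from assms(1) have re: "x^2 - y^2 - T*x + D = 0" and im: "2*x*y - T*y = 0"
    by (simp_all add: z complex_eq_iff power2_eq_square)
  show ?thesis
  proof (cases "y = 0")
    case True
    with re have "x^2 - T*x + D = 0" by simp
    from real_root_bound[OF this assms(2,3)] show ?thesis using True z by (simp add: cmod_def)
  next
    case False
    with im have "x = T/2" by (simp add: algebra_simps)
    have "T = 2*x" using \<open>x = T/2\<close> by simp
    hence "x^2 - T*x = -(x^2)" by (simp add: power2_eq_square)
    with re have "x^2 + y^2 = D" by linarith
    hence "D \<ge> 0" by (metis add_nonneg_nonneg zero_le_power2)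
    have "(cmod z)^2 = D" using z \<open>D \<ge> 0\<close> \<open>x^2 + y^2 = D\<close> by (simp add: cmod_def)
    hence "(cmod z)^2 < 1^2" using assms by simp
    thus ?thesis by (rule power_less_imp_less_base) simp
  qed
qed

lemma mat2_sr:
  fixes p q r s :: real
  assumes "\<bar>p*s - q*r\<bar> < 1" "\<bar>p+s\<bar> < 1 + (p*s - q*r)"
  shows "spectral_radius (map_mat complex_of_real (mat_of_rows_list 2 [[p,q],[r,s]])) < 1"
proof -
  let ?M = "map_mat complex_of_real (mat_of_rows_list 2 [[p,q],[r,s]])"
  have M0: "mat_of_rows_list 2 [[p,q],[r,s]] \<in> carrier_mat 2 2"
    unfolding mat_of_rows_list_def carrier_mat_def by (simp only: dim_row_mat dim_col_mat list.size) simp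
  have M: "?M \<in> carrier_mat 2 2" using map_carrier_mat[THEN iffD2, OF M0] .
  from spectral_radius_mem_max(1)[OF M] obtain z where
    "spectral_radius ?M = cmod z" "z \<in> spectrum ?M" by auto
  hence ev: "eigenvalue ?M z" by (simp add: spectrum_def)
  have cm: "char_matrix ?M z \<in> carrier_mat 2 2" using M by simp
  have "det (char_matrix ?M z) = 0" using eigenvalue_det[OF M, THEN iffD1, OF ev] .
  have e: "?M $$ (0,0) = of_real p" "?M $$ (0,1) = of_real q" "?M $$ (1,0) = of_real r" "?M $$ (1,1) = of_real s"
    by (simp_all add: mat_of_rows_list_def)
  have c: "char_matrix ?M z $$ (i,j) = ?M $$ (i,j) - (if i = j then z else 0)" if "i < 2" "j < 2" for i j
    using that M by (simp add: char_matrix_def)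
  have "det (char_matrix ?M z) = (of_real p - z) * (of_real s - z) - of_real q * of_real r"
  proof -
    have "det (char_matrix ?M z) = (?M$$(0,0) - z)*(?M$$(1,1)-z) - (?M$$(0,1) - 0)*(?M$$(1,0) - 0)"
      unfolding det2[OF cm] by (subst (1 2 3 4) c) simp_all
    thus ?thesis unfolding e by simp
  qed
  hence "(of_real p - z) * (of_real s - z) - of_real q * of_real r = 0"
    using \<open>det (char_matrix ?M z) = 0\<close> by simp
  hence "z^2 - of_real (p+s) * z + of_real (p*s - q*r) = 0"
    by (simp add: algebra_simps power2_eq_square)
  from complex_root_bound[OF this assms] show ?thesis
    using \<open>spectral_radius ?M = cmod z\<close> by simp
qed


lemma Q_bound:
  fixes w1 w2 w3 lam h :: real
  assumes "w1 > 0" "w2 > 0" "w3 > 0" "lam > 0" "h > 0" "w1 * lam * h^2 < w2"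
  shows "spectral_radius (map_mat complex_of_real (Q_h w1 w2 w3 lam h)) < 1"
proof -
  define S where "S = w3 + w2 * h^2 + w1 * h^4 / 4"
  define a where "a = a_h w1 w2 w3 h"
  define b where "b = b_h w1 w2 w3 h"
  have S: "S > 0" unfolding S_def using assms by (simp add: add_pos_nonneg)
  have X: "h * b = (w2 * h^2 + w1 * h^4 / 2) / S"
    unfolding b_def b_h_def S_def by (simp add: field_simps power2_eq_square power3_eq_cube power4_eq_xxxx)
  have Y: "h^2 * a * lam = w1 * h^4 * lam / (2 * S)"
    unfolding a_def a_h_def S_def by (simp add: field_simps power2_eq_square power3_eq_cube power4_eq_xxxx)
  have Ypos: "h^2 * a * lam > 0" unfolding Y using S assms by simp
  have X2: "h * b < 2" unfolding X using S assms
    by (simp add: divide_less_eq S_def add_pos_nonneg)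
  have "w1 * lam * h^2 * h^2 < w2 * h^2" using assms by simp
  hence A1: "w1 * h^4 * lam < w2 * h^2"
    by (simp add: power4_eq_xxxx power2_eq_square algebra_simps)
  have A2: "0 \<le> w1 * h^4" "0 < w2 * h^2" using assms by simp_all
  have "w1 * h^4 * lam < 2 * (2 * (w2 * h^2) + w1 * h^4)" using A1 A2 by (simp add: algebra_simps)
  hence XY: "h^2 * a * lam < 2 * (h * b)" unfolding X Y using S
    by (simp add: field_simps)
  define p where "p = 1 - h^2 / 2 * a * lam"
  define q where "q = h - h^2 / 2 * b"
  define r where "r = - h * a * lam"
  define s where "s = 1 - h * b"
  have Q: "Q_h w1 w2 w3 lam h = mat_of_rows_list 2 [[p,q],[r,s]]"
    unfolding Q_h_def p_def q_def r_def s_def a_def b_def by simp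
  have D: "p*s - q*r = 1 - h * b + h^2 * a * lam / 2"
    unfolding p_def q_def r_def s_def by (simp add: field_simps power2_eq_square)
  have T: "p + s = 2 - h^2 * a * lam / 2 - h * b"
    unfolding p_def s_def by simp
  show ?thesis unfolding Q
  proof (rule mat2_sr)
    show "\<bar>p*s - q*r\<bar> < 1" unfolding D using Ypos X2 XY by linarith
    show "\<bar>p + s\<bar> < 1 + (p*s - q*r)" unfolding D T using Ypos X2 XY by linarith
  qed
qed

theorem lemma1:
  fixes N :: nat and E :: "nat \<Rightarrow> nat \<Rightarrow> bool" and w1 w2 w3 lam :: real
  assumes "N \<ge> 2"
    and "undirected_graph N E"
    and "connected_graph N E"
    and "w1 > 0" and "w2 > 0" and "w3 > 0"
    and "eigenvalue (inv_degree_mat N E * laplacian_mat N E) lam"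
    and "lam > 0"
  shows "\<exists>hi > 0. \<forall>h. 0 < h \<and> h < hi \<longrightarrow>
           spectral_radius (map_mat complex_of_real (Q_h w1 w2 w3 lam h)) < 1"
proof (intro exI[of _ "min 1 (w2 / (w1 * lam))"] conjI allI impI)
  show "min 1 (w2 / (w1 * lam)) > 0" using assms by simp
  fix h assume h: "0 < h \<and> h < min 1 (w2 / (w1 * lam))"
  have "h^2 \<le> h" using h by (simp add: power2_eq_square mult_le_cancel_right1 less_imp_le)
  also have "h < w2 / (w1 * lam)" using h by simp
  finally have "w1 * lam * h^2 < w2" using assms by (simp add: field_simps)
  thus "spectral_radius (map_mat complex_of_real (Q_h w1 w2 w3 lam h)) < 1"
    using Q_bound assms h by blast
qed

end
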